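(* Let $k\ge 1$, let $z_1,\dots,z_k\in\mathbb{C}$ be pairwise distinct with $|z_j|\le 1$ and $z_j\neq 1$ for $j=1,\dots,k$, and let $n\ge 1$ and $n_1,\dots,n_k\ge 1$ be integers. Let $$p(z)=(z-1)^n\prod_{j=1}^{k}(z-z_j)^{n_j},\quad z\in\mathbb{C},$$ and set $m=n+\sum_{j=1}^k n_j$. Then there exists $\zeta\neq 1$ such that $p'(\zeta)=0$ and $$\Big|\zeta-\frac{m-n}{m+(k-1)n}\Big|\le \frac{kn}{m+(k-1)n}.$$ *)

theory Defs
  imports "HOL-Analysis.Analysis"
begin

end

theory Submission
  imports Defs "HOL-Computational_Algebra.Fundamental_Theorem_Algebra"
begin

lemma logder_poly:
  fixes a :: "'b \<Rightarrow> complex"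
  assumes "finite A" "\<And>i. i \<in> A \<Longrightarrow> x \<noteq> a i"
  shows "poly (pderiv (\<Prod>i\<in>A. [:-a i, 1:])) x = (\<Prod>i\<in>A. (x - a i)) * (\<Sum>i\<in>A. 1/(x - a i))"
proof -
  have "poly (pderiv (\<Prod>i\<in>A. [:-a i, 1:])) x = (\<Sum>i\<in>A. \<Prod>l\<in>A-{i}. (x - a l))"
    by (simp add: pderiv_prod poly_sum poly_prod pderiv_pCons)
  also have "\<dots> = (\<Sum>i\<in>A. (\<Prod>l\<in>A. (x - a l)) / (x - a i))"
    by (rule sum.cong) (use assms in \<open>auto simp: prod_diff1\<close>)
  finally show ?thesis by (simp add: sum_distrib_left)
qed

lemma re_half:
  fixes z :: complex assumes "norm z \<le> 1" "z \<noteq> 1"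
  shows "Re (1/(1-z)) \<ge> 1/2"
proof -
  obtain a b where z: "z = Complex a b" by (cases z)
  have h: "a^2 + b^2 \<le> 1" using assms(1) z
    by (simp add: cmod_def)
  have ne: "(1-a)^2 + b^2 > 0" using assms(2) z
    by (auto simp: sum_power2_gt_zero_iff complex_eq_iff)
  have "Re (1/(1-z)) = (1-a)/((1-a)^2+b^2)" using z
    by (simp add: Re_divide power2_eq_square)
  moreover have "(1-a)^2+b^2 \<le> 2*(1-a)" using h by (simp add: power2_eq_square algebra_simps)
  moreover have "1/2 \<le> (1-a)/((1-a)^2+b^2)" using ne calculation(2) by (simp add: le_divide_eq)
  ultimately show ?thesis by simp
qed

lemma aux_div: fixes X a b c :: complex assumes "X \<noteq> 0"
  shows "(c*(X*b) + X*a)/(c*X) = (c*b+a)/c"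
proof -
  have "c*(X*b) + X*a = X*(c*b+a)" by (simp add: algebra_simps)
  thus ?thesis using assms by simp
qed

lemma aux2: fixes c b u :: complex shows "(c*u + b*u)/c = (c+b)/c*u"
  by (metis distrib_right times_divide_eq_left)
lemma aux3: fixes c b u :: complex shows "(c*(1/u) + b/u)/c = (c+b)/c*(1/u)"
  using aux2[of c "1/u" b] by simp

lemma disc:
  fixes v :: complex and R :: real
  assumes "v \<noteq> 0" "R > 0" "Re (1/v) \<ge> 1/(2*R)"
  shows "norm (complex_of_real R - v) \<le> R"
proof -
  obtain a b where v: "v = Complex a b" by (cases v)
  have ne: "a^2 + b^2 > 0" using assms(1) v
    by (auto simp: sum_power2_gt_zero_iff complex_eq_iff)
  have "Re (1/v) = a/(a^2+b^2)" using v by (simp add: Re_divide power2_eq_square)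
  hence "a/(a^2+b^2) \<ge> 1/(2*R)" using assms by simp
  hence "a^2+b^2 \<le> 2*R*a" using ne assms(2) by (simp add: field_simps)
  hence h2: "(R-a)^2 + b^2 \<le> R^2" by (simp add: power2_eq_square algebra_simps)
  have "sqrt ((R-a)^2 + b^2) \<le> R" using real_sqrt_le_mono[OF h2] assms(2)
    by simp
  thus ?thesis using v by (simp add: cmod_def Complex_eq)
qed

theorem theorem1:
  fixes k n :: nat and z :: "nat \<Rightarrow> complex" and ns :: "nat \<Rightarrow> nat"
    and p :: "complex \<Rightarrow> complex" and m :: nat
  assumes "k \<ge> 1"
    and "inj_on z {1..k}"
    and "\<And>j. j \<in> {1..k} \<Longrightarrow> norm (z j) \<le> 1"
    and "\<And>j. j \<in> {1..k} \<Longrightarrow> z j \<noteq> 1"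
    and "n \<ge> 1"
    and "\<And>j. j \<in> {1..k} \<Longrightarrow> ns j \<ge> 1"
    and "p = (\<lambda>w. (w - 1) ^ n * (\<Prod>j=1..k. (w - z j) ^ ns j))"
    and "m = n + (\<Sum>j=1..k. ns j)"
  shows "\<exists>\<zeta>. \<zeta> \<noteq> 1 \<and> deriv p \<zeta> = 0 \<and>
           norm (\<zeta> - complex_of_real ((real m - real n) / (real m + (real k - 1) * real n)))
             \<le> real k * real n / (real m + (real k - 1) * real n)"
proof -
  define A where "A = {1..k}"
  have finA: "finite A" and cardA: "card A = k" by (simp_all add: A_def)
  note inj = assms(2)[folded A_def]
  have z1: "\<And>j. j \<in> A \<Longrightarrow> z j \<noteq> 1" using assms(4) A_def by auto
  have zn: "\<And>j. j \<in> A \<Longrightarrow> norm (z j) \<le> 1" using assms(3) A_def by auto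
  have ns1: "\<And>j. j \<in> A \<Longrightarrow> ns j \<ge> 1" using assms(6) A_def by auto
  define H where "H = (\<Prod>j\<in>A. [:-z j, 1:])"
  define S where "S = (\<Sum>j\<in>A. smult (of_nat (ns j)) (\<Prod>i\<in>A-{j}. [:-z i, 1:]))"
  define G where "G = smult (of_nat n) H + [:-1,1:] * S"
  have polyG: "poly G x = of_nat n * (\<Prod>j\<in>A. (x - z j)) + (x - 1) * (\<Sum>j\<in>A. of_nat (ns j) * (\<Prod>i\<in>A-{j}. (x - z i)))" for x
    by (simp add: G_def H_def S_def poly_sum poly_prod left_diff_distrib)
  have P1: "(\<Prod>j\<in>A. (1 - z j)) \<noteq> 0" using z1 finA by auto
  have G1: "poly G 1 = of_nat n * (\<Prod>j\<in>A. (1 - z j))" by (simp add: polyG)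
  have G1nz: "poly G 1 \<noteq> 0" using G1 P1 assms(5) by simp
  have crit: "w \<noteq> 1 \<and> deriv p w = 0" if w: "poly G w = 0" for w
  proof -
    have w1: "w \<noteq> 1" using w G1nz by auto
    have wz: "w \<noteq> z j" if j: "j \<in> A" for j
    proof
      assume wj: "w = z j"
      have "(\<Sum>i\<in>A. of_nat (ns i) * (\<Prod>l\<in>A-{i}. (z j - z l))) = of_nat (ns j) * (\<Prod>l\<in>A-{j}. (z j - z l)) + (\<Sum>i\<in>A-{j}. of_nat (ns i) * (\<Prod>l\<in>A-{i}. (z j - z l)))"
        using j finA by (simp add: sum.remove)
      also have "(\<Sum>i\<in>A-{j}. of_nat (ns i) * (\<Prod>l\<in>A-{i}. (z j - z l))) = 0"
        using j finA by (intro sum.neutral) (auto simp: prod_zero_iff)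
      finally have eq: "(\<Sum>i\<in>A. of_nat (ns i) * (\<Prod>l\<in>A-{i}. (z j - z l))) = of_nat (ns j) * (\<Prod>l\<in>A-{j}. (z j - z l))" by simp
      have "(\<Prod>l\<in>A-{j}. (z j - z l)) \<noteq> 0"
        using finA inj j by (auto simp: prod_zero_iff inj_on_def)
      moreover have "(\<Prod>l\<in>A. (z j - z l)) = 0" using finA j by (auto simp: prod_zero_iff)
      moreover have "ns j \<ge> 1" using ns1 j by auto
      ultimately have "poly G (z j) \<noteq> 0" using z1[OF j] by (simp add: polyG eq)
      thus False using w wj by simp
    qed
    define Q where "Q = (\<Prod>j\<in>A. (w - z j))"
    have Qnz: "Q \<noteq> 0" using wz finA by (auto simp: Q_def)
    have "(\<Sum>j\<in>A. of_nat (ns j) * (\<Prod>i\<in>A-{j}. (w - z i))) = (\<Sum>j\<in>A. of_nat (ns j) * (Q / (w - z j)))"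
      by (rule sum.cong) (use wz finA in \<open>auto simp: prod_diff1 Q_def\<close>)
    also have "\<dots> = Q * (\<Sum>j\<in>A. of_nat (ns j) / (w - z j))"
      by (simp add: sum_distrib_left mult.commute)
    finally have "Q * (of_nat n + (w - 1) * (\<Sum>j\<in>A. of_nat (ns j) / (w - z j))) = 0"
      using w by (simp add: polyG Q_def[symmetric] algebra_simps)
    hence E: "of_nat n + (w - 1) * (\<Sum>j\<in>A. of_nat (ns j) / (w - z j)) = 0" using Qnz by simp
    define PP where "PP = (\<lambda>u. \<Prod>j\<in>A. (u - z j) ^ ns j)"
    have d1: "((\<lambda>u. (u-1)^n) has_field_derivative of_nat n * (w-1)^(n-1)) (at w)"
      by (auto intro!: derivative_eq_intros)
    have d2: "(PP has_field_derivative (PP w * (\<Sum>j\<in>A. (of_nat (ns j) * (w - z j)^(ns j - 1)) / (w - z j)^ns j))) (at w)"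
      unfolding PP_def
      by (rule has_field_derivative_prod') (use wz in \<open>auto intro!: derivative_eq_intros\<close>)
    have sumeq: "(\<Sum>j\<in>A. (of_nat (ns j) * (w - z j)^(ns j - 1)) / (w - z j)^ns j) = (\<Sum>j\<in>A. of_nat (ns j) / (w - z j))"
    proof (rule sum.cong)
      fix j assume j: "j \<in> A"
      have "(w - z j)^ns j = (w - z j)^(ns j - 1) * (w - z j)"
        using ns1[OF j] by (metis Suc_diff_le diff_Suc_1 power_Suc2)
      thus "(of_nat (ns j) * (w - z j)^(ns j - 1)) / (w - z j)^ns j = of_nat (ns j) / (w - z j)"
        using wz[OF j] by simp
    qed simp
    have pe: "p = (\<lambda>u. (u-1)^n * PP u)" using assms(7) by (simp add: PP_def A_def)
    have "(p has_field_derivative of_nat n * (w-1)^(n-1) * PP w + (PP w * (\<Sum>j\<in>A. of_nat (ns j) / (w - z j))) * (w-1)^n) (at w)"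
      unfolding pe using DERIV_mult[OF d1 d2] sumeq by simp
    moreover have "(w-1)^n = (w-1)^(n-1) * (w-1)"
      using assms(5) by (metis Suc_diff_le diff_Suc_1 power_Suc2)
    ultimately have "(p has_field_derivative (w-1)^(n-1) * PP w * (of_nat n + (w - 1) * (\<Sum>j\<in>A. of_nat (ns j) / (w - z j)))) (at w)"
      by (simp add: algebra_simps)
    hence "deriv p w = 0" using E by (simp add: DERIV_imp_deriv)
    thus ?thesis using w1 by simp
  qed
  have Gnz: "G \<noteq> 0" using G1nz by auto
  have pdH: "poly (pderiv H) 1 = (\<Prod>j\<in>A. (1 - z j)) * (\<Sum>j\<in>A. 1/(1 - z j))"
    unfolding H_def by (rule logder_poly) (use finA z1 in auto)
  have pS: "poly S 1 = (\<Prod>j\<in>A. (1 - z j)) * (\<Sum>j\<in>A. of_nat (ns j) / (1 - z j))"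
  proof -
    have "poly S 1 = (\<Sum>j\<in>A. of_nat (ns j) * (\<Prod>i\<in>A-{j}. (1 - z i)))"
      by (simp add: S_def poly_sum poly_prod)
    also have "\<dots> = (\<Sum>j\<in>A. of_nat (ns j) * ((\<Prod>i\<in>A. (1 - z i)) / (1 - z j)))"
      by (rule sum.cong) (use z1 finA in \<open>auto simp: prod_diff1\<close>)
    finally show ?thesis by (simp add: sum_distrib_left mult.commute)
  qed
  have pdG: "poly (pderiv G) 1 = of_nat n * poly (pderiv H) 1 + poly S 1"
  proof -
    have e1: "pderiv G = smult (of_nat n) (pderiv H) + ([:-1,1:] * pderiv S + S * pderiv [:-1,1:])"
      by (simp only: G_def pderiv_add pderiv_smult pderiv_mult)
    have e2: "pderiv [:-1,1::complex:] = 1" by (simp add: pderiv_pCons)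
    show ?thesis unfolding e1 e2 by simp
  qed
  define rat where "rat = poly (pderiv G) 1 / poly G 1"
  have rat_eq: "rat = (\<Sum>j\<in>A. complex_of_real ((real n + real (ns j)) / real n) * (1 / (1 - z j)))"
  proof -
    have "rat = (of_nat n * (\<Sum>j\<in>A. 1/(1 - z j)) + (\<Sum>j\<in>A. of_nat (ns j) / (1 - z j))) / of_nat n"
      unfolding rat_def pdG pdH pS G1 by (rule aux_div[OF P1])
    also have "\<dots> = (\<Sum>j\<in>A. (of_nat n * (1/(1 - z j)) + of_nat (ns j) / (1 - z j)) / of_nat n)"
      by (simp only: sum_divide_distrib[symmetric] sum.distrib sum_distrib_left)
    also have "\<dots> = (\<Sum>j\<in>A. (of_nat n + of_nat (ns j)) / of_nat n * (1 / (1 - z j)))"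
    proof (rule sum.cong)
      fix j assume "j \<in> A"
      hence "1 - z j \<noteq> 0" using z1 by auto
      show "(of_nat n * (1/(1 - z j)) + of_nat (ns j) / (1 - z j)) / of_nat n = (of_nat n + of_nat (ns j)) / of_nat n * (1 / (1 - z j))"
        by (rule aux3)
    qed simp
    finally show ?thesis by simp
  qed
  define T where "T = (real m + (real k - 1) * real n) / (2 * real n)"
  have mn: "real m \<ge> real n" using assms(8) by (simp add: sum_nonneg)
  have kn: "(real k - 1) * real n \<ge> 0" using assms(1) by simp
  have Dpos0: "real m + (real k - 1) * real n > 0" using mn kn assms(5) by linarith
  have Tpos: "T > 0" using Dpos0 assms(5) by (simp add: T_def)
  have ReRat: "Re rat \<ge> T"
  proof -
    have "Re rat = (\<Sum>j\<in>A. Re (complex_of_real ((real n + real (ns j)) / real n) * (1 / (1 - z j))))"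
      by (simp only: rat_eq Re_sum)
    also have "\<dots> = (\<Sum>j\<in>A. ((real n + real (ns j)) / real n) * Re (1 / (1 - z j)))"
      by (intro sum.cong refl) (simp only: times_complex.sel Re_complex_of_real Im_complex_of_real mult_zero_left diff_zero)
    also have "\<dots> \<ge> (\<Sum>j\<in>A. ((real n + real (ns j)) / real n) * (1/2))"
      by (intro sum_mono mult_left_mono re_half) (use zn z1 in auto)
    finally have "Re rat \<ge> (\<Sum>j\<in>A. ((real n + real (ns j)) / real n) * (1/2))" .
    moreover have "(\<Sum>j\<in>A. ((real n + real (ns j)) / real n) * (1/2)) = T"
    proof -
      have "(\<Sum>j\<in>A. ((real n + real (ns j)) / real n) * (1/2)) = (\<Sum>j\<in>A. (real n + real (ns j))) / (2 * real n)"
        by (simp add: sum_divide_distrib mult.commute)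
      also have "(\<Sum>j\<in>A. (real n + real (ns j))) = real k * real n + real (\<Sum>j\<in>A. ns j)"
        by (simp add: sum.distrib cardA)
      finally show ?thesis using assms(1,8) by (simp add: T_def A_def algebra_simps)
    qed
    ultimately show ?thesis by simp
  qed
  have degH: "degree H \<le> k"
  proof -
    have "degree H \<le> (\<Sum>j\<in>A. degree [:-z j, 1:])" unfolding H_def by (rule degree_prod_sum_le[OF finA, unfolded o_def])
    thus ?thesis using cardA by simp
  qed
  have degS: "degree S \<le> k - 1"
    unfolding S_def
  proof (rule degree_sum_le[OF finA])
    fix j assume j: "j \<in> A"
    have "degree (\<Prod>i\<in>A-{j}. [:-z i, 1:]) \<le> (\<Sum>i\<in>A-{j}. degree [:-z i, 1:])"
      by (rule degree_prod_sum_le[unfolded o_def]) (use finA in auto)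
    also have "\<dots> = k - 1" using j finA cardA by simp
    finally show "degree (smult (of_nat (ns j)) (\<Prod>i\<in>A-{j}. [:-z i, 1:])) \<le> k - 1"
      using degree_smult_le order_trans by blast
  qed
  have degG: "degree G \<le> k"
  proof -
    have "degree ([:-1,1:] * S) \<le> 1 + (k - 1)"
      using degree_mult_le[of "[:-1,1:]" S] degS by simp
    hence "degree ([:-1,1:] * S) \<le> k" using assms(1) by simp
    moreover have "degree (smult (of_nat n) H) \<le> k" using degH degree_smult_le order_trans by blast
    ultimately show ?thesis unfolding G_def using degree_add_le by blast
  qed
  obtain r where fac: "smult (lead_coeff G) (\<Prod>i<degree G. [:-r i, 1:]) = G"
    using complex_poly_decompose' by blast
  define d where "d = degree G"
  have lc: "lead_coeff G \<noteq> 0" using Gnz by simp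
  have polyGr: "poly G x = lead_coeff G * (\<Prod>i<d. (x - r i))" for x
    by (subst fac[symmetric]) (simp add: poly_prod d_def)
  have r1: "r i \<noteq> 1" if "i < d" for i
  proof
    assume "r i = 1"
    hence "poly G 1 = 0" using that by (auto simp: polyGr prod_zero_iff)
    thus False using G1nz by simp
  qed
  have rroot: "poly G (r i) = 0" if "i < d" for i
    using that by (auto simp: polyGr prod_zero_iff)
  have "rat = (\<Sum>i<d. 1 / (1 - r i))"
  proof -
    have "poly (pderiv G) 1 = lead_coeff G * ((\<Prod>i<d. (1 - r i)) * (\<Sum>i<d. 1/(1 - r i)))"
      by (subst fac[symmetric], simp only: pderiv_smult poly_smult d_def[symmetric],
          subst logder_poly) (use r1 in auto)
    moreover have "(\<Prod>i<d. (1 - r i)) \<noteq> 0" using r1 by auto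
    ultimately show ?thesis unfolding rat_def using lc by (simp add: polyGr)
  qed
  hence sumT: "(\<Sum>i<d. Re (1 / (1 - r i))) \<ge> T" using ReRat by (simp add: Re_sum)
  have "\<exists>i<d. Re (1 / (1 - r i)) \<ge> T / real k"
  proof (rule ccontr)
    assume "\<not> ?thesis"
    hence lt: "\<forall>i<d. Re (1 / (1 - r i)) < T / real k" by auto
    have "d \<noteq> 0" using sumT Tpos by (cases "d = 0") auto
    hence "(\<Sum>i<d. Re (1 / (1 - r i))) < (\<Sum>i<d. T / real k)"
      using lt by (intro sum_strict_mono) auto
    also have "\<dots> = real d * T / real k" by simp
    also have "\<dots> \<le> T" using degG Tpos assms(1) d_def by (simp add: field_simps)
    finally show False using sumT by simp
  qed
  then obtain i where i: "i < d" and iT: "Re (1 / (1 - r i)) \<ge> T / real k" by blast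
  define D where "D = real m + (real k - 1) * real n"
  define R where "R = real k * real n / D"
  have Dpos: "D > 0" using Dpos0 by (simp add: D_def)
  have Rpos: "R > 0" using Dpos assms(1,5) by (simp add: R_def)
  have "T / real k = 1 / (2 * R)" using assms(1,5) Dpos by (simp add: T_def R_def D_def field_simps)
  hence "norm (complex_of_real R - (1 - r i)) \<le> R"
    using iT r1[OF i] Rpos by (intro disc) auto
  moreover have "(real m - real n) / D = 1 - R" using Dpos by (simp add: R_def D_def field_simps)
  ultimately have "norm (r i - complex_of_real ((real m - real n) / D)) \<le> R"
  proof -
    assume a1: "norm (complex_of_real R - (1 - r i)) \<le> R" and a2: "(real m - real n) / D = 1 - R"
    have "r i - complex_of_real ((real m - real n) / D) = complex_of_real R - (1 - r i)"
      unfolding a2 by (simp add: of_real_diff)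
    thus ?thesis using a1 by (simp only:)
  qed
  thus ?thesis using crit[OF rroot[OF i]] unfolding D_def R_def by blast
qed
end
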